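(* Consider a commutative diagram of finitely generated free abelian groups consisting of injective morphisms $f:A\to B$ and $f':A'\to B'$ and morphisms $g:A\to A'$, $h:B\to B'$ with $f'\circ g=h\circ f$. Assume that $f$ and $f'$ have finite exponent. (1) If $h(B)=\lambda B'$ for some nonzero integer $\lambda$, then $(\exp f)\lambda A'\leq g(A)\leq \frac{\lambda}{\gcd(\lambda,\exp f')}A'$. (2) If $g(A)\leq\mu A'$ for some nonzero integer $\mu$, then $h(B)\leq\frac{\mu}{\gcd(\mu,\exp f)}B'$. (3) If $h$ has finite exponent then so does $g$, and $\exp g\leq (\exp f)(\exp h)$.
   Context: For a morphism $u:M\to N$ of finitely generated abelian groups, $\exp u:=\exp(N/u(M))$ if $N/u(M)$ is finite (where the exponent of a finite abelian group is the lcm of the orders of its elements), and $\exp u:=\infty$ otherwise; $u$ has finite exponent if $\exp u<\infty$. *)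

theory Defs
  imports Main "HOL-Library.Extended_Nat"
begin

definition zsc :: "int \<Rightarrow> 'a::ab_group_add \<Rightarrow> 'a" where
  "zsc k x = (if 0 \<le> k then (\<Sum>i<nat k. x) else - (\<Sum>i<nat (-k). x))"

definition zmultiples :: "int \<Rightarrow> 'a::ab_group_add set" where
  "zmultiples k = {zsc k x | x. True}"

definition fg_free_abelian :: "'a::ab_group_add itself \<Rightarrow> bool" where
  "fg_free_abelian _ \<longleftrightarrow> (\<exists>B::'a set. finite B \<and>
     (\<forall>x. \<exists>!c. (\<forall>b. b \<notin> B \<longrightarrow> c b = 0) \<and> x = (\<Sum>b\<in>B. zsc (c b) b)))"

definition additive :: "('a::ab_group_add \<Rightarrow> 'b::ab_group_add) \<Rightarrow> bool" where
  "additive f \<longleftrightarrow> (\<forall>x y. f (x + y) = f x + f y)"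

definition coset :: "'a::ab_group_add set \<Rightarrow> 'a \<Rightarrow> 'a set" where
  "coset U x = {y. y - x \<in> U}"

definition coset_ord :: "'a::ab_group_add set \<Rightarrow> 'a \<Rightarrow> nat" where
  "coset_ord U x = (LEAST k::nat. 0 < k \<and> zsc (int k) x \<in> U)"

text \<open>exp u = exponent of N/u(M) (lcm of element orders) if finite, \<infinity> otherwise.\<close>
definition hexp :: "('a::ab_group_add \<Rightarrow> 'b::ab_group_add) \<Rightarrow> enat" where
  "hexp u = (if finite (range (coset (range u)))
             then enat (Lcm (range (coset_ord (range u)))) else \<infinity>)"

end

theory Submission
  imports Defs "HOL-Library.FuncSet"
begin


lemma zsc_0[simp]: "zsc 0 x = 0" by (simp add: zsc_def)

lemma zsc_succ: "zsc (k + 1) x = zsc k x + x"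
proof (cases "k \<ge> 0")
  case True
  then have "nat (k+1) = Suc (nat k)" by simp
  then show ?thesis using True by (simp add: zsc_def add.commute)
next
  case False
  show ?thesis
  proof (cases "k = -1")
    case True then show ?thesis by (simp add: zsc_def)
  next
    case F: False
    define m where "m = nat (-(k+1))"
    have "nat (-k) = Suc m" using False F unfolding m_def by simp
    moreover have "nat (-(k+1)) = m" by (simp add: m_def)
    ultimately show ?thesis using False F
      by (simp add: zsc_def algebra_simps)
  qed
qed

lemma zsc_pred: "zsc (k - 1) x = zsc k x - x"
  using zsc_succ[of "k - 1" x] by simp

lemma zsc_add: "zsc (k + l) x = zsc k x + zsc l x"
proof (induction l rule: int_induct[where k=0])
  case base then show ?case by simp
next
  case (step1 i)
  have "zsc (k + (i+1)) x = zsc (k + i + 1) x" by (simp add: add.assoc)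
  then show ?case using step1 by (simp add: zsc_succ)
next
  case (step2 i)
  have "zsc (k + (i-1)) x = zsc (k + i - 1) x" by (simp add: algebra_simps)
  then show ?case using step2 by (simp add: zsc_pred)
qed

lemma zsc_1[simp]: "zsc 1 x = x" using zsc_succ[of 0 x] by simp

lemma zsc_uminus: "zsc (-k) x = - zsc k x"
  using zsc_add[of k "-k" x] by (simp add: eq_neg_iff_add_eq_0 add.commute)

lemma zsc_diff: "zsc (k - l) x = zsc k x - zsc l x"
  using zsc_add[of k "-l" x] by (simp add: zsc_uminus)

lemma zsc_mult: "zsc (k * l) x = zsc k (zsc l x)"
proof (induction k rule: int_induct[where k=0])
  case base then show ?case by simp
next
  case (step1 i)
  then show ?case by (simp add: distrib_right zsc_add zsc_succ)
next
  case (step2 i)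
  then show ?case by (simp add: left_diff_distrib zsc_diff zsc_pred)
qed

lemma zsc_comm: "zsc k (zsc l x) = zsc l (zsc k x)"
  by (metis zsc_mult mult.commute)

lemma additive_0: "additive u \<Longrightarrow> u 0 = 0"
  unfolding additive_def by (metis add_cancel_right_right add_0)

lemma additive_diff: "additive u \<Longrightarrow> u (x - y) = u x - u y"
  unfolding additive_def by (metis add_diff_cancel diff_add_cancel eq_diff_eq)

lemma additive_zsc: "additive u \<Longrightarrow> u (zsc k x) = zsc k (u x)"
proof (induction k rule: int_induct[where k=0])
  case base then show ?case by (simp add: additive_0)
next
  case (step1 i)
  then show ?case by (simp add: zsc_succ additive_def)
next
  case (step2 i)
  then show ?case by (simp add: zsc_pred additive_diff)
qed

lemma additive_zsc_fun: "additive (zsc k)"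
  unfolding additive_def
proof (intro allI)
  fix x y :: 'a
  show "zsc k (x + y) = zsc k x + zsc k y"
  proof (induction k rule: int_induct[where k=0])
    case base then show ?case by simp
  next
    case (step1 i) then show ?case by (simp only: zsc_succ step1(2)) (simp add: algebra_simps)
  next
    case (step2 i) then show ?case by (simp only: zsc_pred step2(2)) (simp add: algebra_simps)
  qed
qed

lemma zsc_plus: "zsc k (x + y) = zsc k x + zsc k y"
  using additive_zsc_fun unfolding additive_def by blast

lemma zsc_minus: "zsc k (x - y) = zsc k x - zsc k y"
  using additive_diff[OF additive_zsc_fun] by blast

lemma zsc_zero[simp]: "zsc k 0 = 0"
  using additive_0[OF additive_zsc_fun] by blast

lemma additive_sum: "additive u \<Longrightarrow> u (sum g S) = (\<Sum>i\<in>S. u (g i))"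
proof (induction S rule: infinite_finite_induct)
  case (infinite A) then show ?case by (simp add: additive_0)
next
  case empty then show ?case by (simp add: additive_0)
next
  case (insert x F) then show ?case by (simp add: additive_def)
qed

lemma zsc_sum: "zsc k (sum g S) = (\<Sum>i\<in>S. zsc k (g i))"
  using additive_sum[OF additive_zsc_fun] by blast

lemma range_add: "additive u \<Longrightarrow> a \<in> range u \<Longrightarrow> b \<in> range u \<Longrightarrow> a + b \<in> range u"
proof -
  assume u: "additive u" and "a \<in> range u" "b \<in> range u"
  then obtain x y where "a = u x" "b = u y" by blast
  then have "a + b = u (x + y)" using u unfolding additive_def by simp
  then show ?thesis by simp
qed

lemma range_diff: "additive u \<Longrightarrow> a \<in> range u \<Longrightarrow> b \<in> range u \<Longrightarrow> a - b \<in> range u"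
proof -
  assume u: "additive u" and "a \<in> range u" "b \<in> range u"
  then obtain x y where "a = u x" "b = u y" by blast
  then have "a - b = u (x - y)" using additive_diff[OF u] by simp
  then show ?thesis by simp
qed

lemma range_zsc: "additive u \<Longrightarrow> a \<in> range u \<Longrightarrow> zsc k a \<in> range u"
proof -
  assume u: "additive u" and "a \<in> range u"
  then obtain x where "a = u x" by blast
  then have "zsc k a = u (zsc k x)" using additive_zsc[OF u] by simp
  then show ?thesis by simp
qed

lemma range_zero: "additive u \<Longrightarrow> 0 \<in> range u"
  by (metis additive_0 rangeI)

lemma coset_eq_iff: "additive u \<Longrightarrow> coset (range u) a = coset (range u) b \<longleftrightarrow> a - b \<in> range u"
proof
  assume "additive u" "coset (range u) a = coset (range u) b"
  moreover have "a \<in> coset (range u) a" using range_zero[OF \<open>additive u\<close>] by (simp add: coset_def)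
  ultimately show "a - b \<in> range u" by (simp add: coset_def)
next
  assume u: "additive u" and "a - b \<in> range u"
  show "coset (range u) a = coset (range u) b"
    unfolding coset_def
  proof (intro Collect_cong iffI)
    fix y assume "y - a \<in> range u"
    then have "(y - a) + (a - b) \<in> range u" using range_add[OF u] \<open>a - b \<in> range u\<close> by blast
    then show "y - b \<in> range u" by simp
  next
    fix y assume "y - b \<in> range u"
    then have "(y - b) - (a - b) \<in> range u" using range_diff[OF u] \<open>a - b \<in> range u\<close> by blast
    then show "y - a \<in> range u" by simp
  qed
qed

lemma free_torsion:
  assumes "fg_free_abelian TYPE('a::ab_group_add)" "d \<noteq> 0" "zsc d (z::'a) = 0"
  shows "z = 0"
proof -
  obtain B :: "'a set" where B: "finite B"
    and U: "\<forall>x. \<exists>!c. (\<forall>b. b \<notin> B \<longrightarrow> c b = 0) \<and> x = (\<Sum>b\<in>B. zsc (c b) b)"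
    using assms(1) unfolding fg_free_abelian_def by blast
  obtain c where c: "\<forall>b. b \<notin> B \<longrightarrow> c b = 0" "z = (\<Sum>b\<in>B. zsc (c b) b)"
    using U by blast
  have "zsc d z = (\<Sum>b\<in>B. zsc (d * c b) b)"
    using c(2) by (simp add: zsc_sum zsc_mult)
  then have e1: "(0::'a) = (\<Sum>b\<in>B. zsc ((\<lambda>b. d * c b) b) b)" using assms(3) by simp
  have e2: "(0::'a) = (\<Sum>b\<in>B. zsc ((\<lambda>b. 0) b) b)" by simp
  obtain c0 where c0: "\<And>y. (\<forall>b. b \<notin> B \<longrightarrow> y b = 0) \<and> (0::'a) = (\<Sum>b\<in>B. zsc (y b) b) \<Longrightarrow> y = c0"
    using U[rule_format, of 0] by blast
  have "(\<lambda>b. d * c b) = c0" by (rule c0) (use e1 c(1) in simp)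
  moreover have "(\<lambda>b. 0) = c0" by (rule c0) (use e2 in simp)
  ultimately have "(\<lambda>b. d * c b) = (\<lambda>b. 0)" by simp
  then have "\<forall>b. c b = 0" using assms(2) by (metis mult_eq_0_iff)
  then show ?thesis using c(2) by simp
qed



lemma exp_pos_mult:
  fixes u :: "'a::ab_group_add \<Rightarrow> 'b::ab_group_add"
  assumes u: "additive u" and fin: "hexp u < \<infinity>"
  shows "0 < the_enat (hexp u) \<and> (\<forall>y. zsc (int (the_enat (hexp u))) y \<in> range u)"
proof -
  let ?U = "range u"
  have finQ: "finite (range (coset ?U))" using fin by (auto simp: hexp_def split: if_splits)
  have ex: "\<exists>k::nat. 0 < k \<and> zsc (int k) y \<in> ?U" for y
  proof -
    let ?F = "\<lambda>k::nat. coset ?U (zsc (int k) y)"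
    have "range ?F \<subseteq> range (coset ?U)" by auto
    then have "finite (range ?F)" using finQ finite_subset by blast
    then have "\<not> inj ?F" using finite_imageD by blast
    then obtain i j where ij: "i \<noteq> j" "?F i = ?F j" unfolding inj_def by blast
    then have d1: "zsc (int i - int j) y \<in> ?U" using coset_eq_iff[OF u] by (simp add: zsc_diff)
    then have "zsc (- 1) (zsc (int i - int j) y) \<in> ?U" using range_zsc[OF u] by blast
    then have d2: "zsc (int j - int i) y \<in> ?U" by (simp add: zsc_uminus zsc_diff)
    show ?thesis
    proof (cases "i < j")
      case True
      then have "int (j - i) = int j - int i" by simp
      then show ?thesis using d2 True by (intro exI[of _ "j - i"]) simp
    next
      case False
      then have "int (i - j) = int i - int j" by simp
      then show ?thesis using d1 False ij(1) by (intro exI[of _ "i - j"]) simp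
    qed
  qed
  have ordP: "0 < coset_ord ?U y \<and> zsc (int (coset_ord ?U y)) y \<in> ?U" for y
    unfolding coset_ord_def using LeastI_ex[OF ex[of y]] .
  have ord_cong: "coset_ord ?U y = coset_ord ?U y'" if "coset ?U y = coset ?U y'" for y y'
  proof -
    have yy: "y - y' \<in> ?U" using that coset_eq_iff[OF u] by blast
    have "zsc k y \<in> ?U \<longleftrightarrow> zsc k y' \<in> ?U" for k
    proof -
      have e: "zsc k y = zsc k y' + zsc k (y - y')" by (simp add: zsc_minus)
      have "zsc k (y - y') \<in> ?U" using range_zsc[OF u yy] .
      then show ?thesis using e range_add[OF u] range_diff[OF u]
        by (metis add_diff_cancel)
    qed
    then show ?thesis unfolding coset_ord_def by simp
  qed
  have "range (coset_ord ?U) \<subseteq> (\<lambda>c. coset_ord ?U (SOME y. coset ?U y = c)) ` range (coset ?U)"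
  proof
    fix k assume "k \<in> range (coset_ord ?U)"
    then obtain y where k: "k = coset_ord ?U y" by blast
    have "coset ?U (SOME y'. coset ?U y' = coset ?U y) = coset ?U y"
      by (rule someI[of _ y]) simp
    then have "k = coset_ord ?U (SOME y'. coset ?U y' = coset ?U y)"
      using ord_cong k by metis
    then show "k \<in> (\<lambda>c. coset_ord ?U (SOME y. coset ?U y = c)) ` range (coset ?U)" by blast
  qed
  then have finO: "finite (range (coset_ord ?U))" using finQ finite_surj by blast
  define L where "L = Lcm (range (coset_ord ?U))"
  have hL: "hexp u = enat L" using finQ by (simp add: hexp_def L_def)
  have "0 \<notin> range (coset_ord ?U)" using ordP by (metis less_irrefl rangeE)
  then have L0: "L \<noteq> 0" using finO by (simp add: L_def)
  have "zsc (int L) y \<in> ?U" for y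
  proof -
    have "coset_ord ?U y dvd L" unfolding L_def by (rule dvd_Lcm) simp
    then obtain q where "L = coset_ord ?U y * q" by blast
    then have "zsc (int L) y = zsc (int q) (zsc (int (coset_ord ?U y)) y)"
      by (simp add: zsc_mult[symmetric] mult.commute)
    then show ?thesis using ordP range_zsc[OF u] by metis
  qed
  then show ?thesis using hL L0 by simp
qed

lemma exp_le:
  fixes u :: "'a::ab_group_add \<Rightarrow> 'b::ab_group_add"
  assumes u: "additive u" and finQ: "finite (range (coset (range u)))"
    and N: "0 < N" and NU: "\<And>y. zsc (int N) y \<in> range u"
  shows "hexp u \<le> enat N"
proof -
  let ?U = "range u"
  have dv: "coset_ord ?U y dvd N" for y
  proof -
    define k where "k = coset_ord ?U y"
    have Pk: "0 < k \<and> zsc (int k) y \<in> ?U"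
      unfolding k_def coset_ord_def by (rule LeastI[of _ N]) (use N NU in simp)
    have mn: "k \<le> j" if "0 < j \<and> zsc (int j) y \<in> ?U" for j
      unfolding k_def coset_ord_def by (rule Least_le) (use that in simp)
    show ?thesis
    proof (rule ccontr)
      assume "\<not> coset_ord ?U y dvd N"
      then have r0: "0 < N mod k" using k_def by (simp add: dvd_eq_mod_eq_0)
      have rk: "N mod k < k" using Pk by simp
      have "int (N mod k) = int N - int (N div k) * int k"
        by (metis add_diff_cancel_left' div_mult_mod_eq of_nat_add of_nat_mult)
      then have "zsc (int (N mod k)) y = zsc (int N) y - zsc (int (N div k)) (zsc (int k) y)"
        by (simp add: zsc_diff zsc_mult)
      moreover have "zsc (int (N div k)) (zsc (int k) y) \<in> ?U" using Pk range_zsc[OF u] by blast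
      ultimately have "zsc (int (N mod k)) y \<in> ?U" using NU range_diff[OF u] by metis
      then have "k \<le> N mod k" using mn r0 by blast
      then show False using rk by simp
    qed
  qed
  have "Lcm (range (coset_ord ?U)) dvd N" by (rule Lcm_least) (use dv in blast)
  then have "Lcm (range (coset_ord ?U)) \<le> N" using N by (simp add: dvd_imp_le)
  then show ?thesis using finQ by (simp add: hexp_def)
qed

lemma fin_quot:
  fixes u :: "'a::ab_group_add \<Rightarrow> 'c::ab_group_add"
  assumes free: "fg_free_abelian TYPE('c)" and u: "additive u"
    and N: "0 < N" and NU: "\<And>y. zsc (int N) y \<in> range u"
  shows "finite (range (coset (range u)))"
proof -
  let ?U = "range u"
  obtain B :: "'c set" where B: "finite B"
    and U: "\<forall>x. \<exists>!c. (\<forall>b. b \<notin> B \<longrightarrow> c b = 0) \<and> x = (\<Sum>b\<in>B. zsc (c b) b)"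
    using free unfolding fg_free_abelian_def by blast
  have "\<forall>x. \<exists>c. x = (\<Sum>b\<in>B. zsc (c b) b)" using U by blast
  then obtain c where c: "\<And>x. x = (\<Sum>b\<in>B. zsc (c x b) b)" by metis
  let ?R = "(\<lambda>d. coset ?U (\<Sum>b\<in>B. zsc (d b) b)) ` (B \<rightarrow>\<^sub>E {0..<int N})"
  have "finite ?R" using B by (simp add: finite_PiE)
  moreover have "range (coset ?U) \<subseteq> ?R"
  proof
    fix X assume "X \<in> range (coset ?U)"
    then obtain x where X: "X = coset ?U x" by blast
    define d where "d = restrict (\<lambda>b. c x b mod int N) B"
    have dP: "d \<in> B \<rightarrow>\<^sub>E {0..<int N}" using N by (auto simp: d_def)
    have "x - (\<Sum>b\<in>B. zsc (d b) b) = (\<Sum>b\<in>B. zsc (c x b) b - zsc (c x b mod int N) b)"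
      by (subst c[of x]) (simp add: d_def sum_subtractf)
    also have "\<dots> = (\<Sum>b\<in>B. zsc (int N) (zsc (c x b div int N) b))"
      by (rule sum.cong) (simp_all add: zsc_diff[symmetric] zsc_mult[symmetric] minus_mod_eq_mult_div)
    also have "\<dots> = zsc (int N) (\<Sum>b\<in>B. zsc (c x b div int N) b)" by (simp add: zsc_sum)
    finally have "x - (\<Sum>b\<in>B. zsc (d b) b) \<in> ?U" using NU by simp
    then have "X = coset ?U (\<Sum>b\<in>B. zsc (d b) b)" using X coset_eq_iff[OF u] by blast
    then show "X \<in> ?R" using dP by blast
  qed
  ultimately show ?thesis using finite_subset by blast
qed



theorem lemma3p18:
  fixes f :: "'a::ab_group_add \<Rightarrow> 'b::ab_group_add"
    and f' :: "'c::ab_group_add \<Rightarrow> 'd::ab_group_add"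
    and g :: "'a \<Rightarrow> 'c" and h :: "'b \<Rightarrow> 'd"
  assumes freeA: "fg_free_abelian TYPE('a)" and freeB: "fg_free_abelian TYPE('b)"
    and freeA': "fg_free_abelian TYPE('c)" and freeB': "fg_free_abelian TYPE('d)"
    and hom: "additive f" "additive f'" "additive g" "additive h"
    and inj: "inj f" "inj f'"
    and comm: "\<And>x. f' (g x) = h (f x)"
    and finf: "hexp f < \<infinity>" and finf': "hexp f' < \<infinity>"
  shows
    "(\<forall>lam::int. lam \<noteq> 0 \<and> range h = zmultiples lam \<longrightarrow>
        zmultiples (int (the_enat (hexp f)) * lam) \<subseteq> range g \<and>
        range g \<subseteq> zmultiples (lam div gcd lam (int (the_enat (hexp f')))))
     \<and> (\<forall>\<mu>::int. \<mu> \<noteq> 0 \<and> range g \<subseteq> zmultiples \<mu> \<longrightarrow>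
        range h \<subseteq> zmultiples (\<mu> div gcd \<mu> (int (the_enat (hexp f)))))
     \<and> (hexp h < \<infinity> \<longrightarrow> hexp g < \<infinity> \<and> hexp g \<le> hexp f * hexp h)"
proof -
  define e where "e = the_enat (hexp f)"
  define e' where "e' = the_enat (hexp f')"
  have E: "0 < e" "\<And>y. zsc (int e) y \<in> range f"
    using exp_pos_mult[OF hom(1) finf] unfolding e_def by auto
  have E': "0 < e'" "\<And>y. zsc (int e') y \<in> range f'"
    using exp_pos_mult[OF hom(2) finf'] unfolding e'_def by auto
  have injf': "f' x = f' y \<Longrightarrow> x = y" for x y using inj(2) by (simp add: inj_def)
  have P1: "zmultiples (int e * lam) \<subseteq> range g \<and> range g \<subseteq> zmultiples (lam div gcd lam (int e'))"
    if lam: "lam \<noteq> 0" "range h = zmultiples lam" for lam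
  proof
    show "zmultiples (int e * lam) \<subseteq> range g"
    proof
      fix x :: 'c assume "x \<in> zmultiples (int e * lam)"
      then obtain a' where x: "x = zsc (int e * lam) a'" by (auto simp: zmultiples_def)
      have "zsc lam (f' a') \<in> range h" using lam(2) by (auto simp: zmultiples_def)
      then obtain b where b: "h b = zsc lam (f' a')" by auto
      obtain a where a: "f a = zsc (int e) b" using E(2)[of b] by auto
      have "f' (g a) = h (f a)" by (rule comm)
      also have "\<dots> = zsc (int e) (zsc lam (f' a'))" using a b additive_zsc[OF hom(4)] by simp
      also have "\<dots> = f' x" using x additive_zsc[OF hom(2)] by (simp add: zsc_mult)
      finally have "g a = x" by (rule injf')
      then show "x \<in> range g" by auto
    qed
  next
    show "range g \<subseteq> zmultiples (lam div gcd lam (int e'))"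
    proof
      fix x assume "x \<in> range g"
      then obtain a where xa: "x = g a" by auto
      have "h (f a) \<in> zmultiples lam" using lam(2) by auto
      then obtain y where y: "h (f a) = zsc lam y" by (auto simp: zmultiples_def)
      define d where "d = gcd lam (int e')"
      define m where "m = lam div d"
      have lmd: "lam = m * d" unfolding m_def d_def by simp
      obtain s t where st: "s * lam + t * int e' = d" using bezout_int unfolding d_def by blast
      have "zsc lam y = f' (g a)" using y comm by simp
      then have "zsc lam y \<in> range f'" by simp
      then have r1: "zsc s (zsc lam y) \<in> range f'" by (rule range_zsc[OF hom(2)])
      have r2: "zsc t (zsc (int e') y) \<in> range f'" by (rule range_zsc[OF hom(2) E'(2)])
      have "zsc s (zsc lam y) + zsc t (zsc (int e') y) \<in> range f'"
        by (rule range_add[OF hom(2) r1 r2])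
      then have "zsc d y \<in> range f'" using st by (simp add: zsc_mult[symmetric] zsc_add[symmetric])
      then obtain c where c: "f' c = zsc d y" by auto
      have "f' (g a) = zsc lam y" using y comm by simp
      also have "\<dots> = zsc m (f' c)" using c lmd by (simp add: zsc_mult)
      also have "\<dots> = f' (zsc m c)" using additive_zsc[OF hom(2)] by simp
      finally have "g a = zsc m c" by (rule injf')
      then show "x \<in> zmultiples (lam div gcd lam (int e'))"
        using xa by (auto simp: zmultiples_def m_def d_def)
    qed
  qed
  have P2: "range h \<subseteq> zmultiples (\<mu> div gcd \<mu> (int e))"
    if mu: "\<mu> \<noteq> 0" "range g \<subseteq> zmultiples \<mu>" for \<mu>
  proof
    fix x assume "x \<in> range h"
    then obtain b where xb: "x = h b" by auto
    define d where "d = gcd \<mu> (int e)"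
    define m where "m = \<mu> div d"
    define n where "n = int e div d"
    have d0: "d \<noteq> 0" using mu(1) by (simp add: d_def)
    have mud: "\<mu> = d * m" unfolding m_def d_def by simp
    have ed: "int e = d * n" unfolding n_def d_def by simp
    have cop: "coprime m n" unfolding m_def n_def d_def using mu(1) by (intro div_gcd_coprime) simp
    obtain a where a: "f a = zsc (int e) b" using E(2)[of b] by auto
    have "g a \<in> zmultiples \<mu>" using mu(2) by auto
    then obtain a'' where a'': "g a = zsc \<mu> a''" by (auto simp: zmultiples_def)
    define y where "y = f' a''"
    have "zsc (int e) x = h (f a)" using a xb additive_zsc[OF hom(4)] by simp
    also have "\<dots> = f' (g a)" using comm by simp
    also have "\<dots> = zsc \<mu> y" using a'' additive_zsc[OF hom(2)] y_def by simp
    finally have "zsc d (zsc n x) = zsc d (zsc m y)" using mud ed by (simp add: zsc_mult)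
    then have "zsc d (zsc n x - zsc m y) = 0" by (simp add: zsc_minus)
    then have "zsc n x - zsc m y = 0" by (rule free_torsion[OF freeB' d0])
    then have nm: "zsc n x = zsc m y" by simp
    have "gcd m n = 1" using cop by simp
    then obtain s t where st: "s * m + t * n = 1" using bezout_int by metis
    have "x = zsc (s * m + t * n) x" using st by simp
    also have "\<dots> = zsc s (zsc m x) + zsc t (zsc n x)" by (simp add: zsc_add zsc_mult)
    also have "\<dots> = zsc m (zsc s x + zsc t y)" using nm by (simp add: zsc_plus zsc_comm[of m])
    finally show "x \<in> zmultiples (\<mu> div gcd \<mu> (int e))"
      by (auto simp: zmultiples_def m_def d_def)
  qed
  have P3: "hexp g < \<infinity> \<and> hexp g \<le> hexp f * hexp h" if fh: "hexp h < \<infinity>"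
  proof -
    define eh where "eh = the_enat (hexp h)"
    have Eh: "0 < eh" "\<And>y. zsc (int eh) y \<in> range h"
      using exp_pos_mult[OF hom(4) fh] unfolding eh_def by auto
    define N where "N = e * eh"
    have N0: "0 < N" using E(1) Eh(1) by (simp add: N_def)
    have NU: "zsc (int N) y \<in> range g" for y :: 'c
    proof -
      obtain b where b: "h b = zsc (int eh) (f' y)" using Eh(2)[of "f' y"] by (auto simp: image_def)
      obtain a where a: "f a = zsc (int e) b" using E(2)[of b] by auto
      have "f' (g a) = h (f a)" by (rule comm)
      also have "\<dots> = zsc (int e) (zsc (int eh) (f' y))" using a b additive_zsc[OF hom(4)] by simp
      also have "\<dots> = f' (zsc (int N) y)" using additive_zsc[OF hom(2)] by (simp add: zsc_mult N_def)
      finally have "g a = zsc (int N) y" by (rule injf')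
      then show ?thesis by (auto simp: image_def intro: exI[of _ a])
    qed
    have finQ: "finite (range (coset (range g)))" by (rule fin_quot[OF freeA' hom(3) N0 NU])
    have le: "hexp g \<le> enat N" by (rule exp_le[OF hom(3) finQ N0 NU])
    have "hexp f = enat e" using finf unfolding e_def by (cases "hexp f") auto
    moreover have "hexp h = enat eh" using fh unfolding eh_def by (cases "hexp h") auto
    ultimately have "hexp f * hexp h = enat N" by (simp add: N_def)
    moreover have "hexp g < \<infinity>" using le_less_trans[OF le, of \<infinity>] by simp
    ultimately show ?thesis using le by simp
  qed
  show ?thesis using P1 P2 P3 unfolding e_def e'_def by blast
qed

end
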